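(* Let $j=\sqrt{-1}$, $\zeta_8=e^{2\pi j/8}$, and let $\sigma$ be the automorphism of $\mathbb{Q}(\zeta_8)$ fixing $\mathbb{Q}(j)$ with $\sigma(\zeta_8)=-\zeta_8$. For $a\in\mathbb{Z}[\zeta_8]$ and $b\in\mathbb{Z}[j]$ define the $3\times 2$ matrix $$X=\begin{pmatrix} X_S\\ X_T\end{pmatrix}=\begin{pmatrix} a & b\\ \sigma(a) & -b^*\\ b & \sigma(a)^*\end{pmatrix},$$ where $X_S=(a\ \ b)$ is the first row and $X_T=\begin{pmatrix} \sigma(a) & -b^*\\ b & \sigma(a)^*\end{pmatrix}$ consists of the last two rows. Then for every $(a,b)\neq(0,0)$: (i) $\det(X^\dagger X)\geq 1$ (so the code $\{X\}$ has the non-vanishing determinant property), and (ii) $\det(X_S X_S^\dagger)\,\det(X_T X_T^\dagger)\neq 0$ (full diversity in the parallel channel).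
   Context: $c^*$ denotes the complex conjugate of $c\in\mathbb{C}$ (elements of $\mathbb{Q}(\zeta_8)$ are viewed as complex numbers), and $M^\dagger$ denotes the conjugate transpose of a complex matrix $M$. $\mathbb{Z}[\zeta_8]$ is the ring of integers of $\mathbb{Q}(\zeta_8)$ and $\mathbb{Z}[j]$ the ring of Gaussian integers. $\mathbb{Q}(\zeta_8)/\mathbb{Q}(j)$ is a cyclic extension of degree 2 with Galois group generated by $\sigma$, and $a\sigma(a)$ is the relative norm of $a$, which lies in $\mathbb{Z}[j]$ for $a\in\mathbb{Z}[\zeta_8]$. *)

theory Defs
  imports Complex_Main "Jordan_Normal_Form.Schur_Decomposition"
begin

text \<open>Elements of Z[zeta8] are written
  a = a0 + a1 zeta8 + a2 zeta8^2 + a3 zeta8^3 with integer coordinates (integral basis);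
  sigma (the automorphism fixing Q(j), zeta8 to -zeta8) acts by a1, a3 sign change.\<close>

definition zeta8 :: complex where
  "zeta8 = exp (2 * pi * \<i> / 8)"

definition z8elt :: "int \<Rightarrow> int \<Rightarrow> int \<Rightarrow> int \<Rightarrow> complex" where
  "z8elt a0 a1 a2 a3 = of_int a0 + of_int a1 * zeta8 + of_int a2 * zeta8^2 + of_int a3 * zeta8^3"

definition sigma8 :: "int \<Rightarrow> int \<Rightarrow> int \<Rightarrow> int \<Rightarrow> complex" where
  "sigma8 a0 a1 a2 a3 = z8elt a0 (- a1) a2 (- a3)"

definition gaussint :: "int \<Rightarrow> int \<Rightarrow> complex" where
  "gaussint b0 b1 = of_int b0 + of_int b1 * \<i>"

definition codeX :: "complex \<Rightarrow> complex \<Rightarrow> complex \<Rightarrow> complex mat" where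
  "codeX a sa b = mat_of_rows_list 2 [[a, b], [sa, - cnj b], [b, cnj sa]]"

definition codeXS :: "complex \<Rightarrow> complex \<Rightarrow> complex mat" where
  "codeXS a b = mat_of_rows_list 2 [[a, b]]"

definition codeXT :: "complex \<Rightarrow> complex \<Rightarrow> complex mat" where
  "codeXT sa b = mat_of_rows_list 2 [[sa, - cnj b], [b, cnj sa]]"

end

theory Submission imports Defs begin

lemma descent: "(y::int)^2 = 2*x^2 \<Longrightarrow> x = 0"
proof (induction "nat \<bar>x\<bar>" arbitrary: x y rule: less_induct)
  case less
  show ?case
  proof (rule ccontr)
    assume x0: "x \<noteq> 0"
    have "even (y^2)" using less.prems by simp
    then obtain y' where y': "y = 2*y'" by (auto elim: evenE)
    have "x^2 = 2*y'^2" using less.prems y' by (simp add: power2_eq_square)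
    then have "even (x^2)" by simp
    then obtain x' where x': "x = 2*x'" by (auto elim: evenE)
    have "y'^2 = 2*x'^2" using \<open>x^2 = 2*y'^2\<close> x' by (simp add: power2_eq_square)
    moreover have "nat \<bar>x'\<bar> < nat \<bar>x\<bar>" using x' x0 by auto
    ultimately have "x' = 0" using less.hyps by blast
    then show False using x' x0 by simp
  qed
qed

lemma zeta8_eq: "zeta8 = Complex (sqrt 2 / 2) (sqrt 2 / 2)"
proof -
  have "zeta8 = cis (pi/4)" unfolding zeta8_def cis_conv_exp by (simp add: field_simps)
  then show ?thesis by (simp add: cis.ctr cos_45 sin_45)
qed

lemma h2: "(sqrt 2 / 2)^2 = (1/2::real)" by (simp add: power_divide)

lemma hh: "sqrt 2 / 2 * (sqrt 2 / 2) = (1/2::real)" using h2 by (simp add: power2_eq_square)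

lemma z2: "zeta8^2 = \<i>"
  unfolding zeta8_eq power2_eq_square complex_eq_iff using hh by simp
lemma z3: "zeta8^3 = Complex (- (sqrt 2 / 2)) (sqrt 2 / 2)"
proof -
  have "zeta8^3 = zeta8^2 * zeta8" by (simp add: power2_eq_square power3_eq_cube)
  then show ?thesis unfolding z2 by (simp add: zeta8_eq complex_eq_iff)
qed

lemma z8elt_eq: "z8elt x0 x1 x2 x3 = Complex (x0 + sqrt 2 / 2 * (x1 - x3)) (x2 + sqrt 2 / 2 * (x1 + x3))"
proof -
  have g: "\<And>h::real. of_int x0 + of_int x1 * Complex h h + of_int x2 * \<i> + of_int x3 * Complex (-h) h
     = Complex (real_of_int x0 + h * (real_of_int x1 - real_of_int x3)) (real_of_int x2 + h * (real_of_int x1 + real_of_int x3))"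
    by (simp add: complex_eq_iff algebra_simps)
  show ?thesis unfolding z8elt_def z2 z3 unfolding zeta8_eq by (rule g)
qed

lemma lin_zero:
  fixes c :: int and u :: int
  assumes "real_of_int c + sqrt 2 / 2 * real_of_int u = 0"
  shows "c = 0 \<and> u = 0"
proof -
  have "u = 0"
  proof (rule ccontr)
    assume "u \<noteq> 0"
    have "(real_of_int c)^2 = (sqrt 2 / 2 * u)^2" using assms
      by (metis add_eq_0_iff power2_minus)
    also have "\<dots> = (1/2) * (real_of_int u)^2" by (simp only: power_mult_distrib h2)
    finally have "real_of_int (u^2) = real_of_int (2 * c^2)" by simp
    then have "u^2 = 2*c^2" by linarith
    then have "c = 0" by (rule descent)
    then show False using assms \<open>u \<noteq> 0\<close> by simp
  qed
  then show ?thesis using assms by simp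
qed

lemma z8elt_zero: "z8elt x0 x1 x2 x3 = 0 \<Longrightarrow> x0 = 0 \<and> x1 = 0 \<and> x2 = 0 \<and> x3 = 0"
proof -
  assume "z8elt x0 x1 x2 x3 = 0"
  then have r: "real_of_int x0 + sqrt 2 / 2 * real_of_int (x1 - x3) = 0"
     and i: "real_of_int x2 + sqrt 2 / 2 * real_of_int (x1 + x3) = 0"
    unfolding z8elt_eq complex_eq_iff by auto
  from lin_zero[OF r] lin_zero[OF i] show ?thesis by auto
qed

lemma prod_gen:
  fixes h p q a b :: real
  assumes hh: "h*h = 1/2"
  shows "Complex (p + h*(a-b)) (q + h*(a+b)) * Complex (p - h*(a-b)) (q - h*(a+b))
       = Complex (p*p - q*q + 2*a*b) (2*p*q - a*a + b*b)"
proof -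
  have re: "(p + h*(a-b))*(p - h*(a-b)) - (q + h*(a+b))*(q - h*(a+b)) = p*p - q*q + (h*h)*((a+b)*(a+b) - (a-b)*(a-b))"
    by (simp add: algebra_simps)
  have im: "(p + h*(a-b))*(q - h*(a+b)) + (q + h*(a+b))*(p - h*(a-b)) = 2*p*q - 2*(h*h)*((a-b)*(a+b))"
    by (simp add: algebra_simps)
  show ?thesis unfolding complex_eq_iff using re im unfolding hh by (simp add: algebra_simps)
qed

lemma sigma_eq: "sigma8 x0 x1 x2 x3 = Complex (real_of_int x0 - sqrt 2 / 2 * (real_of_int x1 - real_of_int x3)) (real_of_int x2 - sqrt 2 / 2 * (real_of_int x1 + real_of_int x3))"
proof -
    have g: "\<And>h p q a b::real. Complex (p + h*(-a - -b)) (q + h*(-a + -b)) = Complex (p - h*(a-b)) (q - h*(a+b))"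
      by (simp add: complex_eq_iff algebra_simps)
    show ?thesis unfolding sigma8_def z8elt_eq of_int_minus by (rule g)
qed

lemma norm_prod: "z8elt x0 x1 x2 x3 * sigma8 x0 x1 x2 x3
   = Complex (of_int (x0^2 - x2^2 + 2*x1*x3)) (of_int (2*x0*x2 - x1^2 + x3^2))"
  unfolding sigma_eq z8elt_eq prod_gen[OF hh] by (simp add: power2_eq_square)


lemma det2: assumes "A \<in> carrier_mat 2 2"
  shows "det A = A$$(0,0)*A$$(1,1) - A$$(0,1)*A$$(1,0)"
proof -
  have "det A = (\<Sum>j<2. A $$ (0,j) * cofactor A 0 j)" by (rule laplace_expansion_row[OF assms]) auto
  also have "\<dots> = A$$(0,0)*A$$(1,1) - A$$(0,1)*A$$(1,0)"
    using assms by (simp add: numeral_2_eq_2 cofactor_def det_single mat_delete_def)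
  finally show ?thesis .
qed

lemma det2l: "det (mat_of_rows_list 2 [[p,q],[r,t::complex]]) = p*t - q*r"
  by (subst det2) (auto simp: mat_of_rows_list_def numeral_2_eq_2)

lemma det1l: "det (mat_of_rows_list 1 [[p::complex]]) = p"
  by (subst det_single) (auto simp: mat_of_rows_list_def)

lemma XX: "mat_adjoint (codeX a sa b) * codeX a sa b = mat_of_rows_list 2 [[a*cnj a + sa*cnj sa + b*cnj b, cnj a * b],[cnj b * a, 2*b*cnj b + sa * cnj sa]]"
  apply (rule eq_matI)
  apply (auto simp: codeX_def mat_adjoint_def mat_of_rows_list_def scalar_prod_def numeral_2_eq_2 numeral_3_eq_3 less_Suc_eq cols_def mat_of_rows_def)
  done

lemma XS: "codeXS a b * mat_adjoint (codeXS a b) = mat_of_rows_list 1 [[a*cnj a + b*cnj b]]"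
  apply (rule eq_matI)
  apply (auto simp: codeXS_def mat_adjoint_def mat_of_rows_list_def scalar_prod_def numeral_2_eq_2 less_Suc_eq cols_def mat_of_rows_def)
  done

lemma XT: "codeXT sa b * mat_adjoint (codeXT sa b) = mat_of_rows_list 2 [[sa*cnj sa + b*cnj b, 0],[0, b*cnj b + sa*cnj sa]]"
  apply (rule eq_matI)
  apply (auto simp: codeXT_def mat_adjoint_def mat_of_rows_list_def scalar_prod_def numeral_2_eq_2 less_Suc_eq cols_def mat_of_rows_def)
  done

lemma int_sq_ge1: "(x::int) \<noteq> 0 \<Longrightarrow> 1 \<le> x^2"
proof -
  assume "x \<noteq> 0" then have "0 < x^2" by simp
  then show ?thesis by linarith
qed

lemma gauss_ge1: assumes "Complex (of_int x) (of_int y) \<noteq> 0" shows "1 \<le> (cmod (Complex (of_int x) (of_int y)))^2"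
proof -
  have "x \<noteq> 0 \<or> y \<noteq> 0" using assms by (auto simp: complex_eq_iff)
  then have "1 \<le> x^2 + y^2" using int_sq_ge1[of x] int_sq_ge1[of y]
    by (smt (verit) zero_le_power2)
  then have "1 \<le> real_of_int (x^2 + y^2)" by linarith
  then show ?thesis by (simp add: cmod_power2)
qed

theorem mainTheorem2:
  fixes a0 a1 a2 a3 b0 b1 :: int
  defines "a \<equiv> z8elt a0 a1 a2 a3"
      and "sa \<equiv> sigma8 a0 a1 a2 a3"
      and "b \<equiv> gaussint b0 b1"
  assumes "(a, b) \<noteq> (0, 0)"
  shows "Im (det (mat_adjoint (codeX a sa b) * codeX a sa b)) = 0
       \<and> Re (det (mat_adjoint (codeX a sa b) * codeX a sa b)) \<ge> 1
       \<and> det (codeXS a b * mat_adjoint (codeXS a b))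
         * det (codeXT sa b * mat_adjoint (codeXT sa b)) \<noteq> 0"
proof -
  define A where "A = (cmod a)^2"
  define S where "S = (cmod sa)^2"
  define B where "B = (cmod b)^2"
  have Ae: "a * cnj a = of_real A" unfolding A_def by (metis complex_norm_square)
  have Se: "sa * cnj sa = of_real S" unfolding S_def by (metis complex_norm_square)
  have Be: "b * cnj b = of_real B" unfolding B_def by (metis complex_norm_square)
  have A0: "A \<ge> 0" "S \<ge> 0" "B \<ge> 0" unfolding A_def S_def B_def by auto
  have sa_nz: "sa \<noteq> 0" if "a \<noteq> 0"
  proof
    assume "sa = 0"
    then have "z8elt a0 (-a1) a2 (-a3) = 0" unfolding sa_def sigma8_def .
    then have "a0 = 0 \<and> a1 = 0 \<and> a2 = 0 \<and> a3 = 0" using z8elt_zero by fastforce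
    then show False using that unfolding a_def z8elt_def by simp
  qed
  have AS: "A * S \<ge> 1" if "a \<noteq> 0"
  proof -
    have nz: "a * sa \<noteq> 0" using that sa_nz[OF that] by simp
    have "A * S = (cmod (a*sa))^2" unfolding A_def S_def by (simp add: norm_mult power_mult_distrib)
    also have "\<dots> \<ge> 1" using nz unfolding a_def sa_def norm_prod by (rule gauss_ge1)
    finally show ?thesis .
  qed
  have B1: "B \<ge> 1" if "b \<noteq> 0"
    using that gauss_ge1[of b0 b1] unfolding B_def b_def gaussint_def by (simp add: Complex_eq mult.commute)
  have Bp: "B > 0" if "b \<noteq> 0" using B1[OF that] by simp
  have Sp: "S > 0" if "a \<noteq> 0" using sa_nz[OF that] unfolding S_def by simp
  have Ap: "A > 0" if "a \<noteq> 0" using that unfolding A_def by simp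
  have d1: "det (mat_adjoint (codeX a sa b) * codeX a sa b) = of_real ((A+S+B)*(2*B+S) - A*B)"
  proof -
    have "cnj a * b * (cnj b * a) = (a * cnj a) * (b * cnj b)" by (simp add: algebra_simps)
    moreover have "2*b*cnj b = 2*(b*cnj b)" by simp
    ultimately have "det (mat_adjoint (codeX a sa b) * codeX a sa b) = (a*cnj a + sa*cnj sa + b*cnj b)*(2*(b*cnj b) + sa*cnj sa) - (a*cnj a)*(b*cnj b)"
      unfolding XX det2l by simp
    then show ?thesis unfolding Ae Se Be by simp
  qed
  have D: "(A+S+B)*(2*B+S) - A*B = A*B + A*S + 3*S*B + S*S + 2*B*B" by (simp add: algebra_simps)
  have pos: "A*B \<ge> 0" "S*B \<ge> 0" "S*S \<ge> 0" "A*S \<ge> 0" "B*B \<ge> 0" using A0 by auto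
  have ge1: "(A+S+B)*(2*B+S) - A*B \<ge> 1"
  proof (cases "b = 0")
    case True
    then have "a \<noteq> 0" using assms(4) by simp
    then show ?thesis unfolding D using AS pos by linarith
  next
    case False
    have "B*B \<ge> 1" using B1[OF False] mult_mono[of 1 B 1 B] by simp
    then show ?thesis unfolding D using pos by linarith
  qed
  have d3: "det (codeXS a b * mat_adjoint (codeXS a b)) * det (codeXT sa b * mat_adjoint (codeXT sa b))
     = of_real ((A+B) * ((S+B)*(S+B)))"
    unfolding XS XT det1l det2l by (simp add: Ae Se Be algebra_simps)
  have nz3: "(A+B) * ((S+B)*(S+B)) \<noteq> 0"
  proof (cases "b = 0")
    case True
    then have "a \<noteq> 0" using assms(4) by simp
    then show ?thesis using Ap Sp A0 by (smt (verit) mult_pos_pos)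
  next
    case False
    then show ?thesis using Bp A0 by (smt (verit) mult_pos_pos)
  qed
  have "complex_of_real ((A+B) * ((S+B)*(S+B))) \<noteq> 0" using nz3 of_real_eq_0_iff by blast
  then show ?thesis unfolding d1 d3 using ge1 by (simp only: Im_complex_of_real Re_complex_of_real simp_thms)
qed

end
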